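(* Let $k$ be an algebraically closed field of characteristic $p$ and $\pi: X\to Y$ a $\mathbb Z/p$-cover of smooth projective curves over $k$. Suppose that $y$ is an Artin–Schreier generator of $\pi$ in global standard form. Then $z := y^{p-1}$ is a magical element for $\pi$, i.e. $\mathrm{ord}_P(z)\ge -d'_P$ for every $P\in X(k)$ and $\mathrm{tr}_{k(X)/k(Y)}(z)\ne 0$; moreover, the dual of $z$ with respect to the trace pairing is $z^\vee := z-2$, i.e. $\mathrm{tr}_{k(X)/k(Y)}(g_1^*(z)g_2^*(z^\vee)) = \delta_{g_1,g_2}$ for all $g_1,g_2\in\mathbb Z/p$.
   Context: An Artin–Schreier generator of $\pi$ is $y\in k(X)$ with $k(X) = k(Y)(y)$, $y^p - y = f\in k(Y)$, and $\sigma^*(y) = y+1$ for a generator $\sigma$ of $\mathbb Z/p$. It is in local standard form at $Q\in Y(k)$ if $f$ is regular at $Q$ or has a pole at $Q$ of order not divisible by $p$; it is in global standard form if it is in local standard form at every $Q\in Y(k)$ and $f\notin k$. For $P\in X(k)$ with lower ramification groups $G_{P,i}$, $d'_P := \sum_{i\ge1}(\#G_{P,i}-1)$. *)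

theory Defs
  imports "HOL-Computational_Algebra.Polynomial"
begin

text \<open>All fields live inside one ambient field type 'a, which plays the role of k(X).
  Subfields (k, k(Y)) are represented as subsets.\<close>

definition subfield :: "'a::field set \<Rightarrow> bool" where
  "subfield S \<longleftrightarrow> 0 \<in> S \<and> 1 \<in> S \<and> (\<forall>a\<in>S. \<forall>b\<in>S. a + b \<in> S \<and> a * b \<in> S)
     \<and> (\<forall>a\<in>S. - a \<in> S \<and> inverse a \<in> S)"

definition gen_field :: "'a::field set \<Rightarrow> 'a set" where
  "gen_field S = \<Inter>{F. subfield F \<and> S \<subseteq> F}"

definition alg_closed_subfield :: "'a::field set \<Rightarrow> bool" where
  "alg_closed_subfield k \<longleftrightarrow> subfield k \<and>
     (\<forall>q :: 'a poly. set (coeffs q) \<subseteq> k \<longrightarrow> degree q > 0 \<longrightarrow> (\<exists>a\<in>k. poly q a = 0))"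

text \<open>K is a function field of one variable over k (= function field of a smooth projective
  curve over k): K contains an element t transcendental over k and K is a finite
  extension of k(t).\<close>
definition function_field :: "'a::field set \<Rightarrow> 'a set \<Rightarrow> bool" where
  "function_field k K \<longleftrightarrow> subfield k \<and> subfield K \<and> k \<subseteq> K \<and>
     (\<exists>t\<in>K. (\<forall>q :: 'a poly. set (coeffs q) \<subseteq> k \<longrightarrow> q \<noteq> 0 \<longrightarrow> poly q t \<noteq> 0) \<and>
        (\<exists>B. finite B \<and> B \<subseteq> K \<and>
           (\<forall>x\<in>K. \<exists>c. (\<forall>b\<in>B. c b \<in> gen_field (insert t k)) \<and> x = (\<Sum>b\<in>B. c b * b))))"

text \<open>Normalized discrete valuation on the subfield F, trivial on k (only meaningful on
  nonzero elements). For k algebraically closed these are exactly the k-points of the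
  smooth projective curve with function field F; v is then ord at that point.\<close>
definition dval :: "'a::field set \<Rightarrow> 'a set \<Rightarrow> ('a \<Rightarrow> int) \<Rightarrow> bool" where
  "dval k F v \<longleftrightarrow>
     (\<forall>a\<in>F - {0}. \<forall>b\<in>F - {0}. v (a * b) = v a + v b) \<and>
     (\<forall>a\<in>F - {0}. \<forall>b\<in>F - {0}. a + b \<noteq> 0 \<longrightarrow> v (a + b) \<ge> min (v a) (v b)) \<and>
     (\<forall>c\<in>k - {0}. v c = 0) \<and>
     v ` (F - {0}) = UNIV"

definition field_aut :: "('a::field \<Rightarrow> 'a) \<Rightarrow> bool" where
  "field_aut g \<longleftrightarrow> bij g \<and> (\<forall>a b. g (a + b) = g a + g b \<and> g (a * b) = g a * g b)"

definition Gal :: "'a::field set \<Rightarrow> ('a \<Rightarrow> 'a) set" where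
  "Gal K = {g. field_aut g \<and> (\<forall>a\<in>K. g a = a)}"

definition trace :: "'a::field set \<Rightarrow> 'a \<Rightarrow> 'a" where
  "trace K x = (\<Sum>g\<in>Gal K. g x)"

definition ram_group :: "'a::field set \<Rightarrow> ('a \<Rightarrow> int) \<Rightarrow> nat \<Rightarrow> ('a \<Rightarrow> 'a) set" where
  "ram_group K v i = {g\<in>Gal K. (\<forall>x. x \<noteq> 0 \<longrightarrow> v (g x) = v x) \<and>
       (\<forall>x. (x = 0 \<or> v x \<ge> 0) \<longrightarrow> g x - x = 0 \<or> v (g x - x) \<ge> int i + 1)}"

definition dprime :: "'a::field set \<Rightarrow> ('a \<Rightarrow> int) \<Rightarrow> nat" where
  "dprime K v = (\<Sum>i\<in>{i. i \<ge> 1 \<and> card (ram_group K v i) > 1}. card (ram_group K v i) - 1)"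

definition AS_generator :: "nat \<Rightarrow> 'a::field set \<Rightarrow> 'a \<Rightarrow> 'a \<Rightarrow> ('a \<Rightarrow> 'a) \<Rightarrow> bool" where
  "AS_generator p K y f \<sigma> \<longleftrightarrow> gen_field (insert y K) = UNIV \<and> f \<in> K \<and> y ^ p - y = f \<and>
     \<sigma> \<in> Gal K \<and> \<sigma> y = y + 1"

definition local_standard_form :: "nat \<Rightarrow> 'a::field \<Rightarrow> ('a \<Rightarrow> int) \<Rightarrow> bool" where
  "local_standard_form p f w \<longleftrightarrow> f = 0 \<or> w f \<ge> 0 \<or> \<not> int p dvd (- w f)"

definition global_standard_form :: "nat \<Rightarrow> 'a::field set \<Rightarrow> 'a set \<Rightarrow> 'a \<Rightarrow> bool" where
  "global_standard_form p k K f \<longleftrightarrow> f \<notin> k \<and> (\<forall>w. dval k K w \<longrightarrow> local_standard_form p f w)"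

definition magical :: "'a::field set \<Rightarrow> 'a set \<Rightarrow> 'a \<Rightarrow> bool" where
  "magical k K z \<longleftrightarrow> (\<forall>v. dval k UNIV v \<longrightarrow> v z \<ge> - int (dprime K v)) \<and> trace K z \<noteq> 0"

end

theory Submission
  imports Defs "HOL-Computational_Algebra.Primes"
begin

lemma subfieldD:
  assumes "subfield S"
  shows "0 \<in> S" "1 \<in> S" "a \<in> S \<Longrightarrow> b \<in> S \<Longrightarrow> a + b \<in> S"
    "a \<in> S \<Longrightarrow> b \<in> S \<Longrightarrow> a * b \<in> S" "a \<in> S \<Longrightarrow> - a \<in> S"
    "a \<in> S \<Longrightarrow> inverse a \<in> S"
  using assms unfolding subfield_def by auto

lemma subfield_diff: "subfield S \<Longrightarrow> a \<in> S \<Longrightarrow> b \<in> S \<Longrightarrow> a - b \<in> S"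
  unfolding diff_conv_add_uminus by (intro subfieldD(3) subfieldD(5))

lemma subfield_divide: "subfield S \<Longrightarrow> a \<in> S \<Longrightarrow> b \<in> S \<Longrightarrow> a / b \<in> S"
  unfolding divide_inverse by (intro subfieldD(4) subfieldD(6))

lemma subfield_of_nat: "subfield S \<Longrightarrow> of_nat n \<in> S"
  by (induction n) (simp_all add: subfieldD(1,2,3))

lemma subfield_power: "subfield S \<Longrightarrow> a \<in> S \<Longrightarrow> a ^ n \<in> S"
  by (induction n) (simp_all add: subfieldD(2,4))

lemma subfield_sum: "subfield S \<Longrightarrow> (\<And>i. i \<in> A \<Longrightarrow> g i \<in> S) \<Longrightarrow> sum g A \<in> S"
  by (induction A rule: infinite_finite_induct) (simp_all add: subfieldD(1,3))

lemma gen_field_least: "subfield F \<Longrightarrow> S \<subseteq> F \<Longrightarrow> gen_field S \<subseteq> F"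
  unfolding gen_field_def by auto

lemma field_aut_add: "field_aut g \<Longrightarrow> g (a + b) = g a + g b"
  and field_aut_mult: "field_aut g \<Longrightarrow> g (a * b) = g a * g b"
  unfolding field_aut_def by auto

lemma field_aut_0: "field_aut g \<Longrightarrow> g 0 = 0"
proof -
  assume g: "field_aut g"
  have "g 0 + g 0 = g (0 + 0)" by (rule field_aut_add[OF g, symmetric])
  also have "\<dots> = g 0 + 0" by simp
  finally show ?thesis by (rule add_left_imp_eq)
qed

lemma field_aut_uminus: "field_aut g \<Longrightarrow> g (- a) = - g a"
proof -
  assume g: "field_aut g"
  have "g a + g (- a) = g (a + - a)" by (rule field_aut_add[OF g, symmetric])
  also have "\<dots> = 0" using field_aut_0[OF g] by simp
  finally have "g a + g (- a) = 0" .
  from minus_unique[OF this] show ?thesis by simp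
qed

lemma field_aut_diff: "field_aut g \<Longrightarrow> g (a - b) = g a - g b"
proof -
  assume g: "field_aut g"
  have "g (a - b) = g (a + - b)" by (simp only: diff_conv_add_uminus)
  also have "\<dots> = g a + - g b" by (simp only: field_aut_add[OF g] field_aut_uminus[OF g])
  finally show ?thesis by (simp only: diff_conv_add_uminus)
qed

lemma field_aut_1: "field_aut g \<Longrightarrow> g 1 = (1::'a::field)"
proof -
  assume g: "field_aut g"
  then have "surj g" by (simp add: field_aut_def bij_is_surj)
  then obtain u where u: "1 = g u" using surjD[of g 1] by auto
  have "g 1 = g 1 * 1" by simp
  also have "\<dots> = g 1 * g u" by (rule arg_cong[where f="\<lambda>x. g 1 * x"], rule u)
  also have "\<dots> = g (1 * u)" by (rule field_aut_mult[OF g, symmetric])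
  also have "\<dots> = g u" by simp
  also have "\<dots> = 1" by (rule u[symmetric])
  finally show ?thesis .
qed

lemma field_aut_inj: "field_aut g \<Longrightarrow> g a = g b \<Longrightarrow> a = b"
proof -
  assume "field_aut g" "g a = g b"
  moreover have "inj g" using \<open>field_aut g\<close> by (simp add: field_aut_def bij_is_inj)
  ultimately show "a = b" by (simp add: inj_eq)
qed

lemma field_aut_eq_0_iff: "field_aut g \<Longrightarrow> g a = 0 \<longleftrightarrow> a = 0"
proof -
  assume g: "field_aut g"
  show ?thesis using field_aut_inj[OF g, of a 0] field_aut_0[OF g] by auto
qed

lemma field_aut_inverse: "field_aut g \<Longrightarrow> g (inverse a) = inverse (g (a::'a::field))"
proof (cases "a = 0")
  case True
  assume "field_aut g" then show ?thesis using True by (simp add: field_aut_0)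
next
  case False
  assume g: "field_aut g"
  have "g a * g (inverse a) = g (a * inverse a)" by (rule field_aut_mult[OF g, symmetric])
  also have "\<dots> = g 1" using False by simp
  also have "\<dots> = 1" by (rule field_aut_1[OF g])
  finally have "g a * g (inverse a) = 1" .
  then have "inverse (g a) = g (inverse a)" by (rule inverse_unique)
  then show ?thesis by simp
qed

lemma field_aut_divide: "field_aut g \<Longrightarrow> g (a / b) = g a / g (b::'a::field)"
proof -
  assume g: "field_aut g"
  have "g (a / b) = g (a * inverse b)" by (simp only: divide_inverse)
  also have "\<dots> = g a * inverse (g b)" by (simp only: field_aut_mult[OF g] field_aut_inverse[OF g])
  finally show ?thesis by (simp only: divide_inverse)
qed

lemma field_aut_power: "field_aut g \<Longrightarrow> g (a ^ n) = g a ^ n"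
  by (induction n) (auto simp: field_aut_1 field_aut_mult)

lemma field_aut_of_nat: "field_aut g \<Longrightarrow> g (of_nat n) = (of_nat n :: 'a::field)"
  by (induction n) (auto simp: field_aut_1 field_aut_add field_aut_0)

lemma field_aut_numeral: "field_aut g \<Longrightarrow> g (numeral n) = (numeral n :: 'a::field)"
  using field_aut_of_nat[of g "numeral n"] by simp

lemma field_aut_sum: "field_aut g \<Longrightarrow> g (sum h A) = (\<Sum>i\<in>A. g (h i))"
  by (induction A rule: infinite_finite_induct) (auto simp: field_aut_0 field_aut_add)

lemma field_aut_comp: "field_aut g \<Longrightarrow> field_aut h \<Longrightarrow> field_aut (g \<circ> h)"
proof -
  assume g: "field_aut g" and h: "field_aut h"
  have "bij (g \<circ> h)" using g h unfolding field_aut_def by (blast intro: bij_comp)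
  moreover have "\<forall>a b. (g \<circ> h) (a + b) = (g \<circ> h) a + (g \<circ> h) b \<and> (g \<circ> h) (a * b) = (g \<circ> h) a * (g \<circ> h) b"
    by (simp add: field_aut_add[OF g] field_aut_add[OF h] field_aut_mult[OF g] field_aut_mult[OF h])
  ultimately show ?thesis unfolding field_aut_def by blast
qed

lemma field_aut_id: "field_aut id"
  unfolding field_aut_def by (simp add: bij_id)

lemma field_aut_eq_subfield:
  assumes "field_aut g" "field_aut h"
  shows "subfield {x::'a::field. g x = h x}"
  unfolding subfield_def
  by (simp add: field_aut_0[OF assms(1)] field_aut_1[OF assms(1)] field_aut_add[OF assms(1)] field_aut_mult[OF assms(1)]
      field_aut_uminus[OF assms(1)] field_aut_inverse[OF assms(1)]
      field_aut_0[OF assms(2)] field_aut_1[OF assms(2)] field_aut_add[OF assms(2)] field_aut_mult[OF assms(2)]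
      field_aut_uminus[OF assms(2)] field_aut_inverse[OF assms(2)])


locale AS =
  fixes k K :: "'a::field set" and p :: nat and y f :: 'a and \<sigma> :: "'a \<Rightarrow> 'a"
  assumes prime: "prime p" and char: "CHAR('a) = p"
    and sfk: "subfield k" and sfK: "subfield K" and kK: "k \<subseteq> K"
    and gen: "gen_field (insert y K) = UNIV" and fK: "f \<in> K" and feq: "y ^ p - y = f"
    and sigGal: "\<sigma> \<in> Gal K" and sigy: "\<sigma> y = y + 1"
begin

lemma p_ge2: "p \<ge> 2" using prime prime_ge_2_nat by blast

lemma frob: "(a + b :: 'a) ^ p = a ^ p + b ^ p"
proof -
  have c: "prime CHAR('a)" using prime char by simp
  show ?thesis by (rule freshmans_dream[OF c char[symmetric]])
qed

lemma frob_diff: "(a - b :: 'a) ^ p = a ^ p - b ^ p"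
proof -
  have "a ^ p = ((a - b) + b) ^ p" by simp
  also have "\<dots> = (a - b) ^ p + b ^ p" by (rule frob)
  finally show ?thesis by simp
qed

lemma of_nat_pow: "(of_nat c :: 'a) ^ p = of_nat c"
proof (induction c)
  case 0 then show ?case using p_ge2 by simp
next
  case (Suc c)
  have "(of_nat (Suc c) :: 'a) ^ p = (of_nat c + 1) ^ p" by (simp add: add.commute)
  also have "\<dots> = of_nat c ^ p + 1 ^ p" by (rule frob)
  finally show ?case using Suc by (simp add: add.commute)
qed

lemma of_nat_p: "(of_nat p :: 'a) = 0"
  using char by (metis of_nat_CHAR)

lemma of_nat_eq_0: "(of_nat c :: 'a) = 0 \<longleftrightarrow> p dvd c"
  using of_nat_eq_0_iff_char_dvd[where 'a='a, of c] char by simp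

lemma of_nat_inj:
  assumes "c < p" "d < p" "(of_nat c :: 'a) = of_nat d" shows "c = d"
proof -
  { fix c d :: nat assume cd: "c \<le> d" "d < p" "(of_nat c :: 'a) = of_nat d"
    then have "(of_nat (d - c) :: 'a) = 0" by (simp add: of_nat_diff)
    then have "p dvd (d - c)" using of_nat_eq_0 by blast
    moreover have "d - c < p" using cd by simp
    ultimately have "d - c = 0" using dvd_imp_le by (metis neq0_conv not_le)
    then have "c = d" using cd by simp }
  then show ?thesis using assms by (metis nle_le)
qed

lemma roots: "{x :: 'a. x ^ p = x} = of_nat ` {..<p}"
proof -
  define P :: "'a poly" where "P = monom 1 p - [:0, 1:]"
  have polyP: "poly P x = x ^ p - x" for x by (simp add: P_def poly_monom)
  have "coeff P p = 1" using p_ge2 by (simp add: P_def coeff_monom coeff_eq_0)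
  then have P0: "P \<noteq> 0" by auto
  have "degree P \<le> max (degree (monom (1::'a) p)) (degree [:0, 1::'a:])"
    unfolding P_def by (rule degree_diff_le_max)
  then have degP: "degree P \<le> p" using p_ge2 by (simp add: degree_monom_eq)
  have R: "{x :: 'a. x ^ p = x} = {x. poly P x = 0}" by (simp add: polyP)
  have fin: "finite {x :: 'a. x ^ p = x}" unfolding R using P0 by (rule poly_roots_finite)
  have cardR: "card {x :: 'a. x ^ p = x} \<le> p"
    unfolding R using card_poly_roots_bound[OF P0] degP by linarith
  have sub: "of_nat ` {..<p} \<subseteq> {x :: 'a. x ^ p = x}" using of_nat_pow by auto
  have inj: "inj_on (of_nat :: nat \<Rightarrow> 'a) {..<p}"
    by (intro inj_onI) (auto intro: of_nat_inj)
  have "card (of_nat ` {..<p} :: 'a set) = p" using card_image[OF inj] by simp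
  then have "card (of_nat ` {..<p} :: 'a set) = card {x :: 'a. x ^ p = x}"
    using cardR card_mono[OF fin sub] by linarith
  then show ?thesis using card_subset_eq[OF fin sub] by simp
qed

lemma Gal_aut: "g \<in> Gal K \<Longrightarrow> field_aut g" unfolding Gal_def by auto
lemma Gal_fix: "g \<in> Gal K \<Longrightarrow> a \<in> K \<Longrightarrow> g a = a" unfolding Gal_def by auto

lemma of_nat_k: "of_nat c \<in> k" using sfk by (rule subfield_of_nat)
lemma of_nat_K: "of_nat c \<in> K" using sfK by (rule subfield_of_nat)

lemma yK: "y \<notin> K"
proof
  assume "y \<in> K"
  then have "\<sigma> y = y" using Gal_fix[OF sigGal] by blast
  then show False using sigy by simp
qed

lemma y0: "y \<noteq> 0" using yK subfieldD(1)[OF sfK] by auto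

lemma f0: "f \<noteq> 0"
proof
  assume "f = 0"
  then have "y \<in> {x :: 'a. x ^ p = x}" using feq by simp
  then have "y \<in> K" unfolding roots using of_nat_K by auto
  then show False using yK by simp
qed

lemma Gal_y: assumes g: "g \<in> Gal K" shows "\<exists>c<p. g y = y + of_nat c"
proof -
  have ga: "field_aut g" using g by (rule Gal_aut)
  have "g y ^ p - g y = g (y ^ p - y)"
    by (simp add: field_aut_diff[OF ga] field_aut_power[OF ga])
  also have "\<dots> = f" using feq Gal_fix[OF g fK] by simp
  finally have e: "g y ^ p - g y = f" .
  have "(g y - y) ^ p = g y - y" using e feq by (simp add: frob_diff algebra_simps)
  then have "g y - y \<in> of_nat ` {..<p}" using roots by blast
  then obtain c where "c < p" "g y - y = of_nat c" by auto
  then show ?thesis by (intro exI[of _ c]) (auto simp: algebra_simps)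
qed

lemma Gal_eq: assumes "g \<in> Gal K" "h \<in> Gal K" "g y = h y" shows "g = h"
proof -
  have sf: "subfield {x. g x = h x}"
    using field_aut_eq_subfield Gal_aut assms by blast
  have "insert y K \<subseteq> {x. g x = h x}" using assms(3) Gal_fix[OF assms(1)] Gal_fix[OF assms(2)] by auto
  then have "gen_field (insert y K) \<subseteq> {x. g x = h x}" using gen_field_least sf by blast
  then show ?thesis using gen by auto
qed

lemma Gal_comp: "g \<in> Gal K \<Longrightarrow> h \<in> Gal K \<Longrightarrow> g \<circ> h \<in> Gal K"
  unfolding Gal_def using field_aut_comp by auto

lemma sig_pow: "(\<sigma> ^^ c) \<in> Gal K \<and> (\<sigma> ^^ c) y = y + of_nat c"
proof (induction c)
  case 0 then show ?case unfolding Gal_def using field_aut_id by (simp add: id_def)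
next
  case (Suc c)
  have 1: "\<sigma> ^^ Suc c = \<sigma> \<circ> \<sigma> ^^ c" by simp
  have 2: "\<sigma> \<circ> \<sigma> ^^ c \<in> Gal K" using Gal_comp[OF sigGal] Suc by blast
  have "\<sigma> (y + of_nat c) = y + of_nat (Suc c)"
    using field_aut_add[OF Gal_aut[OF sigGal]] Gal_fix[OF sigGal of_nat_K] sigy by simp
  then have 3: "(\<sigma> ^^ Suc c) y = y + of_nat (Suc c)" using Suc by simp
  show ?case by (rule conjI, subst 1, rule 2, rule 3)
qed

lemma Gal_img: "Gal K = (\<lambda>c. \<sigma> ^^ c) ` {..<p}"
proof
  show "Gal K \<subseteq> (\<lambda>c. \<sigma> ^^ c) ` {..<p}"
  proof
    fix g assume g: "g \<in> Gal K"
    obtain c where c: "c < p" "g y = y + of_nat c" using Gal_y[OF g] by blast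
    have "g y = (\<sigma> ^^ c) y" using c sig_pow by simp
    then have "g = \<sigma> ^^ c" using Gal_eq[OF g conjunct1[OF sig_pow[of c]]] by simp
    then show "g \<in> (\<lambda>c. \<sigma> ^^ c) ` {..<p}" using c by auto
  qed
  show "(\<lambda>c. \<sigma> ^^ c) ` {..<p} \<subseteq> Gal K" using sig_pow by auto
qed

lemma sig_inj: "inj_on (\<lambda>c. \<sigma> ^^ c) {..<p}"
proof (intro inj_onI)
  fix c d assume "c \<in> {..<p}" "d \<in> {..<p}" "\<sigma> ^^ c = \<sigma> ^^ d"
  then have "(of_nat c :: 'a) = of_nat d" using sig_pow[of c] sig_pow[of d] by auto
  then show "c = d" using of_nat_inj \<open>c \<in> {..<p}\<close> \<open>d \<in> {..<p}\<close> by auto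
qed

lemma card_Gal: "card (Gal K) = p"
  unfolding Gal_img using card_image[OF sig_inj] by simp

lemma finite_Gal: "finite (Gal K)"
  unfolding Gal_img by simp

lemma trace_eq: "trace K x = (\<Sum>c<p. (\<sigma> ^^ c) x)"
  unfolding trace_def Gal_img by (simp add: sum.reindex[OF sig_inj])

lemma sig_pow_aut: "field_aut (\<sigma> ^^ c)" using sig_pow Gal_aut by blast

end


context AS
begin

lemma T_zero: "n \<le> p - 2 \<Longrightarrow> (\<Sum>c<p. (Y + of_nat c) ^ n) = (0::'a)"
proof (induction n rule: less_induct)
  case (less n)
  define u where "u c = Y + of_nat c" for c
  have tel: "(\<Sum>c<p. u (Suc c) ^ Suc n - u c ^ Suc n) = 0"
    using sum_lessThan_telescope[of "\<lambda>c. u c ^ Suc n" p] of_nat_p by (simp add: u_def)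
  have step: "u (Suc c) ^ Suc n - u c ^ Suc n = (\<Sum>j\<le>n. of_nat (Suc n choose j) * u c ^ j)" for c
  proof -
    have "u (Suc c) = u c + 1" by (simp add: u_def)
    then have "u (Suc c) ^ Suc n = (\<Sum>j\<le>Suc n. of_nat (Suc n choose j) * u c ^ j * 1 ^ (Suc n - j))"
      by (simp only: binomial_ring)
    also have "\<dots> = (\<Sum>j\<le>n. of_nat (Suc n choose j) * u c ^ j) + u c ^ Suc n"
      by (simp add: sum.atMost_Suc)
    finally show ?thesis by simp
  qed
  have "0 = (\<Sum>c<p. \<Sum>j\<le>n. of_nat (Suc n choose j) * u c ^ j)" using tel step by simp
  also have "\<dots> = (\<Sum>j\<le>n. of_nat (Suc n choose j) * (\<Sum>c<p. u c ^ j))"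
    by (simp add: sum_distrib_left) (rule sum.swap)
  also have "\<dots> = (\<Sum>j\<in>{n}. of_nat (Suc n choose j) * (\<Sum>c<p. u c ^ j))"
  proof (rule sum.mono_neutral_right)
    show "\<forall>j\<in>{..n} - {n}. of_nat (Suc n choose j) * (\<Sum>c<p. u c ^ j) = (0::'a)"
    proof
      fix j assume "j \<in> {..n} - {n}"
      then have "j < n" by auto
      then have "(\<Sum>c<p. u c ^ j) = 0" using less.IH[of j] less.prems unfolding u_def by simp
      then show "of_nat (Suc n choose j) * (\<Sum>c<p. u c ^ j) = (0::'a)" by simp
    qed
  qed auto
  also have "\<dots> = of_nat (Suc n) * (\<Sum>c<p. u c ^ n)" by simp
  finally have "of_nat (Suc n) * (\<Sum>c<p. u c ^ n) = (0::'a)" by simp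
  moreover have "(of_nat (Suc n) :: 'a) \<noteq> 0"
  proof
    assume "(of_nat (Suc n) :: 'a) = 0"
    then have "p dvd Suc n" using of_nat_eq_0 by blast
    moreover have "Suc n < p" using less.prems p_ge2 by linarith
    ultimately show False using dvd_imp_le by fastforce
  qed
  ultimately show ?case unfolding u_def by simp
qed

lemma S_pm1: "(\<Sum>c<p. (of_nat c :: 'a) ^ (p - 1)) = -1"
proof -
  obtain q where q: "p = Suc q" using p_ge2 by (cases p) auto
  have one: "(of_nat (Suc i) :: 'a) ^ (p - 1) = 1" if "i < q" for i
  proof -
    let ?x = "(of_nat (Suc i) :: 'a)"
    have "?x \<noteq> 0"
    proof
      assume "?x = 0"
      then have "p dvd Suc i" using of_nat_eq_0 by blast
      then have "p \<le> Suc i" by (rule dvd_imp_le) simp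
      then show False using that q by simp
    qed
    moreover have "?x * ?x ^ (p - 1) = ?x * 1"
      using of_nat_pow[of "Suc i"] q by simp
    ultimately show ?thesis by (metis mult_left_cancel)
  qed
  have "(\<Sum>c<p. (of_nat c :: 'a) ^ (p - 1)) = 0 ^ (p - 1) + (\<Sum>i<q. (of_nat (Suc i) :: 'a) ^ (p - 1))"
    unfolding q by (simp only: sum.lessThan_Suc_shift of_nat_0)
  also have "\<dots> = (\<Sum>i<q. 1)" using one q p_ge2 by simp
  also have "\<dots> = of_nat q" by simp
  also have "\<dots> = of_nat p - 1" using q by simp
  finally show ?thesis using of_nat_p by simp
qed

lemma T_pm1: "(\<Sum>c<p. (Y + of_nat c) ^ (p - 1)) = (-1::'a)"
proof -
  have "(\<Sum>c<p. (Y + of_nat c) ^ (p - 1))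
      = (\<Sum>c<p. \<Sum>j\<le>p-1. of_nat (p - 1 choose j) * of_nat c ^ j * Y ^ (p - 1 - j))"
    by (rule sum.cong[OF refl], subst add.commute, rule binomial_ring)
  also have "\<dots> = (\<Sum>j\<le>p-1. of_nat (p - 1 choose j) * Y ^ (p - 1 - j) * (\<Sum>c<p. (0 + of_nat c) ^ j))"
    by (simp add: sum_distrib_left sum.swap[of _ "{..<p}"] mult_ac)
  also have "\<dots> = (\<Sum>j\<in>{p-1}. of_nat (p - 1 choose j) * Y ^ (p - 1 - j) * (\<Sum>c<p. (0 + of_nat c) ^ j))"
  proof (rule sum.mono_neutral_right)
    show "\<forall>j\<in>{..p-1} - {p-1}. of_nat (p - 1 choose j) * Y ^ (p - 1 - j) * (\<Sum>c<p. (0 + of_nat c) ^ j) = (0::'a)"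
    proof
      fix j assume "j \<in> {..p-1} - {p-1}"
      then have "j \<le> p - 2" by auto
      then show "of_nat (p - 1 choose j) * Y ^ (p - 1 - j) * (\<Sum>c<p. (0 + of_nat c) ^ j) = (0::'a)"
        using T_zero[of j 0] by simp
    qed
  qed auto
  also have "\<dots> = -1" using S_pm1 by simp
  finally show ?thesis .
qed

lemma AS_sum:
  fixes Y \<delta> :: 'a
  assumes dp: "\<delta> ^ p = \<delta>"
  shows "(\<Sum>c<p. (Y + of_nat c) ^ (p - 1) * ((Y + of_nat c + \<delta>) ^ (p - 1) - 2)) = 1 - \<delta> ^ (p - 1)"
proof -
  define u where "u c = Y + of_nat c" for c
  define F where "F = Y ^ p - Y"
  have up: "u c ^ p = u c + F" for c unfolding u_def F_def frob of_nat_pow by simp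
  have X: "(\<Sum>c<p. u c ^ (p - 1 + k)) = (if k = 0 \<or> k = p - 1 then -1 else 0)" if kp: "k \<le> p - 1" for k
  proof (cases "k = 0")
    case True then show ?thesis using T_pm1 by (simp add: u_def)
  next
    case False
    have e: "u c ^ (p - 1 + k) = u c ^ k + F * u c ^ (k - 1)" for c
    proof -
      have "p - 1 + k = p + (k - 1)" using False p_ge2 by simp
      then have "u c ^ (p - 1 + k) = u c ^ p * u c ^ (k - 1)" by (simp add: power_add)
      also have "\<dots> = u c * u c ^ (k - 1) + F * u c ^ (k - 1)" by (simp add: up algebra_simps)
      also have "u c * u c ^ (k - 1) = u c ^ k" using False by (cases k) simp_all
      finally show ?thesis .
    qed
    have "(\<Sum>c<p. u c ^ (p - 1 + k)) = (\<Sum>c<p. u c ^ k) + F * (\<Sum>c<p. u c ^ (k - 1))"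
      by (simp only: e sum.distrib sum_distrib_left)
    also have "(\<Sum>c<p. u c ^ (k - 1)) = 0" using T_zero[of "k - 1" Y] kp False unfolding u_def by simp
    also have "(\<Sum>c<p. u c ^ k) = (if k = p - 1 then -1 else 0)"
      using T_zero[of k Y] T_pm1[of Y] kp unfolding u_def by auto
    finally show ?thesis using False by simp
  qed
  have "(\<Sum>c<p. u c ^ (p - 1) * (u c + \<delta>) ^ (p - 1))
      = (\<Sum>c<p. \<Sum>k\<le>p-1. of_nat (p - 1 choose k) * \<delta> ^ (p - 1 - k) * u c ^ (p - 1 + k))"
    apply (rule sum.cong[OF refl])
    apply (simp only: binomial_ring sum_distrib_left)
    apply (rule sum.cong[OF refl])
    apply (simp only: power_add)
    apply (simp add: mult_ac)
    done
  also have "\<dots> = (\<Sum>k\<le>p-1. of_nat (p - 1 choose k) * \<delta> ^ (p - 1 - k) * (\<Sum>c<p. u c ^ (p - 1 + k)))"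
    by (simp add: sum_distrib_left sum.swap[of _ "{..<p}"])
  also have "\<dots> = (\<Sum>k\<le>p-1. if k = 0 \<or> k = p - 1 then - (of_nat (p - 1 choose k) * \<delta> ^ (p - 1 - k)) else 0)"
  proof (rule sum.cong[OF refl])
    fix k assume "k \<in> {..p-1}"
    then have "k \<le> p - 1" by simp
    from X[OF this] show "of_nat (p - 1 choose k) * \<delta> ^ (p - 1 - k) * (\<Sum>c<p. u c ^ (p - 1 + k))
       = (if k = 0 \<or> k = p - 1 then - (of_nat (p - 1 choose k) * \<delta> ^ (p - 1 - k)) else 0)"
      by simp
  qed
  also have "\<dots> = (\<Sum>k\<in>{0, p-1}. - (of_nat (p - 1 choose k) * \<delta> ^ (p - 1 - k)))"
    by (rule sum.mono_neutral_cong_right) auto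
  also have "\<dots> = -(\<delta> ^ (p - 1)) - 1" using p_ge2 by simp
  finally have main: "(\<Sum>c<p. u c ^ (p - 1) * (u c + \<delta>) ^ (p - 1)) = -(\<delta> ^ (p - 1)) - 1" .
  have "(\<Sum>c<p. u c ^ (p - 1) * ((u c + \<delta>) ^ (p - 1) - 2))
      = (\<Sum>c<p. u c ^ (p - 1) * (u c + \<delta>) ^ (p - 1)) - 2 * (\<Sum>c<p. u c ^ (p - 1))"
    by (simp add: algebra_simps sum_subtractf sum_distrib_left)
  also have "(\<Sum>c<p. u c ^ (p - 1)) = -1" using T_pm1 unfolding u_def by simp
  finally show ?thesis using main unfolding u_def by simp
qed

end


context AS
begin

lemma sig_apply_pow: "(\<sigma> ^^ n) (y ^ j) = (y + of_nat n) ^ j"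
  using field_aut_power[OF sig_pow_aut, of n y j] sig_pow[of n] by simp

lemma sig_apply_z2: "(\<sigma> ^^ n) (y ^ j - 2) = (y + of_nat n) ^ j - 2"
  using field_aut_diff[OF sig_pow_aut, of n "y ^ j" 2] field_aut_numeral[OF sig_pow_aut, of n "num.Bit0 num.One"]
    sig_apply_pow[of n j] by simp

lemma trace_z: "trace K (y ^ (p - 1)) = -1"
  unfolding trace_eq sig_apply_pow using T_pm1[of y] by simp

lemma trace_part:
  "\<forall>g1\<in>Gal K. \<forall>g2\<in>Gal K.
     trace K (g1 (y ^ (p - 1)) * g2 (y ^ (p - 1) - 2)) = (if g1 = g2 then 1 else 0)"
proof (intro ballI)
  fix g1 g2 assume g1: "g1 \<in> Gal K" and g2: "g2 \<in> Gal K"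
  obtain a where a: "a < p" "g1 = \<sigma> ^^ a" using g1 Gal_img by auto
  obtain b where b: "b < p" "g2 = \<sigma> ^^ b" using g2 Gal_img by auto
  define Y where "Y = y + of_nat a"
  define dd :: "'a" where "dd = of_nat b - of_nat a"
  have tm: "(\<sigma> ^^ c) ((\<sigma> ^^ a) (y ^ (p - 1)) * (\<sigma> ^^ b) (y ^ (p - 1) - 2))
      = (Y + of_nat c) ^ (p - 1) * ((Y + of_nat c + dd) ^ (p - 1) - 2)" for c
  proof -
    have "(\<sigma> ^^ c) ((\<sigma> ^^ a) (y ^ (p - 1)) * (\<sigma> ^^ b) (y ^ (p - 1) - 2))
        = (\<sigma> ^^ c) ((\<sigma> ^^ a) (y ^ (p - 1))) * (\<sigma> ^^ c) ((\<sigma> ^^ b) (y ^ (p - 1) - 2))"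
      by (rule field_aut_mult[OF sig_pow_aut])
    also have "(\<sigma> ^^ c) ((\<sigma> ^^ a) (y ^ (p - 1))) = (\<sigma> ^^ (c + a)) (y ^ (p - 1))"
      by (simp add: funpow_add)
    also have "(\<sigma> ^^ c) ((\<sigma> ^^ b) (y ^ (p - 1) - 2)) = (\<sigma> ^^ (c + b)) (y ^ (p - 1) - 2)"
      by (simp add: funpow_add)
    also have "(\<sigma> ^^ (c + a)) (y ^ (p - 1)) = (Y + of_nat c) ^ (p - 1)"
      unfolding sig_apply_pow Y_def by (simp add: algebra_simps)
    also have "(\<sigma> ^^ (c + b)) (y ^ (p - 1) - 2) = (Y + of_nat c + dd) ^ (p - 1) - 2"
      unfolding sig_apply_z2 Y_def dd_def by (simp add: algebra_simps)
    finally show ?thesis .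
  qed
  have dp: "dd ^ p = dd" unfolding dd_def frob_diff of_nat_pow ..
  have "trace K (g1 (y ^ (p - 1)) * g2 (y ^ (p - 1) - 2))
      = (\<Sum>c<p. (Y + of_nat c) ^ (p - 1) * ((Y + of_nat c + dd) ^ (p - 1) - 2))"
    unfolding trace_eq a(2) b(2) tm ..
  also have "\<dots> = 1 - dd ^ (p - 1)" by (rule AS_sum[OF dp])
  also have "\<dots> = (if g1 = g2 then 1 else 0)"
  proof (cases "a = b")
    case True
    then have "dd = 0" unfolding dd_def by simp
    moreover have "g1 = g2" using a b True by simp
    ultimately show ?thesis using p_ge2 by simp
  next
    case False
    then have "g1 \<noteq> g2" using a b sig_inj unfolding inj_on_def by auto
    have "dd \<noteq> 0" using False of_nat_inj[OF b(1) a(1)] unfolding dd_def by auto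
    moreover have "dd * dd ^ (p - 1) = dd * 1"
    proof -
      have "dd * dd ^ (p - 1) = dd ^ Suc (p - 1)" by simp
      also have "Suc (p - 1) = p" using p_ge2 by simp
      finally show ?thesis using dp by simp
    qed
    ultimately have "dd ^ (p - 1) = 1" by (metis mult_left_cancel)
    then show ?thesis using \<open>g1 \<noteq> g2\<close> by simp
  qed
  finally show "trace K (g1 (y ^ (p - 1)) * g2 (y ^ (p - 1) - 2)) = (if g1 = g2 then 1 else 0)" .
qed

end


context AS
begin

definition Rp :: "'a set" where
  "Rp = {x. \<exists>c. (\<forall>j. c j \<in> K) \<and> x = (\<Sum>j<p. c j * y ^ j)}"

lemma RpI: "(\<And>j. c j \<in> K) \<Longrightarrow> (\<Sum>j<p. c j * y ^ j) \<in> Rp"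
  unfolding Rp_def by blast

lemma RpE: assumes "x \<in> Rp" obtains c where "\<And>j. c j \<in> K" "x = (\<Sum>j<p. c j * y ^ j)"
  using assms unfolding Rp_def by blast

lemma Rp_monom: assumes "a \<in> K" "j < p" shows "a * y ^ j \<in> Rp"
proof -
  define c where "c i = (if i = j then a else 0)" for i
  have cK: "c i \<in> K" for i using assms subfieldD(1)[OF sfK] by (simp add: c_def)
  have "(\<lambda>i. c i * y ^ i) = (\<lambda>i. if i = j then a * y ^ j else 0)" by (auto simp: c_def)
  then have "(\<Sum>i<p. c i * y ^ i) = (\<Sum>i<p. if i = j then a * y ^ j else 0)"
    by (rule arg_cong[where f="\<lambda>h. sum h {..<p}"])
  also have "\<dots> = a * y ^ j" using assms(2) by (subst sum.delta) auto
  finally have "(\<Sum>i<p. c i * y ^ i) = a * y ^ j" .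
  then show ?thesis using RpI[of c, OF cK] by simp
qed

lemma Rp_K: "a \<in> K \<Longrightarrow> a \<in> Rp"
  using Rp_monom[of a 0] p_ge2 by simp

lemma Rp_y: "y \<in> Rp"
  using Rp_monom[of 1 1] p_ge2 subfieldD(2)[OF sfK] by simp

lemma Rp_0: "0 \<in> Rp" using Rp_K subfieldD(1)[OF sfK] by blast
lemma Rp_1: "1 \<in> Rp" using Rp_K subfieldD(2)[OF sfK] by blast

lemma Rp_add: assumes "x \<in> Rp" "x' \<in> Rp" shows "x + x' \<in> Rp"
proof -
  obtain c where c: "\<And>j. c j \<in> K" "x = (\<Sum>j<p. c j * y ^ j)" using assms(1) unfolding Rp_def by blast
  obtain d where d: "\<And>j. d j \<in> K" "x' = (\<Sum>j<p. d j * y ^ j)" using assms(2) unfolding Rp_def by blast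
  have "x + x' = (\<Sum>j<p. (c j + d j) * y ^ j)" using c d by (simp add: distrib_right sum.distrib)
  moreover have "c j + d j \<in> K" for j using c d subfieldD(3)[OF sfK] by blast
  ultimately show ?thesis using RpI by simp
qed

lemma Rp_scal: assumes "a \<in> K" "x \<in> Rp" shows "a * x \<in> Rp"
proof -
  obtain c where c: "\<And>j. c j \<in> K" "x = (\<Sum>j<p. c j * y ^ j)" using assms(2) unfolding Rp_def by blast
  have "a * x = (\<Sum>j<p. (a * c j) * y ^ j)" using c by (simp add: sum_distrib_left mult.assoc)
  moreover have "a * c j \<in> K" for j using c assms(1) subfieldD(4)[OF sfK] by blast
  ultimately show ?thesis using RpI by simp
qed

lemma Rp_uminus: "x \<in> Rp \<Longrightarrow> - x \<in> Rp"
  using Rp_scal[of "-1" x] subfieldD(5)[OF sfK subfieldD(2)[OF sfK]] by simp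

lemma Rp_diff: "x \<in> Rp \<Longrightarrow> x' \<in> Rp \<Longrightarrow> x - x' \<in> Rp"
  using Rp_add[of x "- x'"] Rp_uminus[of x'] by simp

lemma Rp_sum: "(\<And>i. i \<in> A \<Longrightarrow> t i \<in> Rp) \<Longrightarrow> sum t A \<in> Rp"
proof (induction A rule: infinite_finite_induct)
  case (infinite A) then show ?case using Rp_0 by simp
next
  case empty then show ?case using Rp_0 by simp
next
  case (insert a A) then show ?case using Rp_add by simp
qed

lemma Rp_mult_y: assumes "x \<in> Rp" shows "y * x \<in> Rp"
proof -
  obtain c where c: "\<And>j. c j \<in> K" "x = (\<Sum>j<p. c j * y ^ j)" using assms unfolding Rp_def by blast
  obtain q where q: "p = Suc q" using p_ge2 by (cases p) auto
  have yp: "y ^ Suc q = y + f" using feq q by (simp add: algebra_simps)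
  have "y * x = (\<Sum>j<p. c j * y ^ Suc j)" unfolding c(2) sum_distrib_left
    by (intro sum.cong refl) (simp add: mult_ac)
  also have "\<dots> = (\<Sum>j<q. c j * y ^ Suc j) + c q * y ^ Suc q" unfolding q by (rule sum.lessThan_Suc)
  also have "\<dots> = (\<Sum>j<q. c j * y ^ Suc j) + (c q * f + c q * y ^ 1)" using yp by (simp add: algebra_simps)
  finally have e: "y * x = (\<Sum>j<q. c j * y ^ Suc j) + (c q * f + c q * y ^ 1)" .
  have 1: "(\<Sum>j<q. c j * y ^ Suc j) \<in> Rp"
    by (rule Rp_sum, rule Rp_monom) (use c q in auto)
  have 2: "c q * f \<in> Rp" using Rp_K subfieldD(4)[OF sfK] c fK by blast
  have 3: "c q * y ^ 1 \<in> Rp" using p_ge2 by (intro Rp_monom c) simp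
  show ?thesis unfolding e using 1 2 3 Rp_add by blast
qed

lemma Rp_mult_ypow: "x \<in> Rp \<Longrightarrow> y ^ n * x \<in> Rp"
proof (induction n)
  case 0 then show ?case by simp
next
  case (Suc n)
  have "y ^ Suc n * x = y * (y ^ n * x)" by (simp add: mult.assoc)
  moreover have "y * (y ^ n * x) \<in> Rp" using Suc by (intro Rp_mult_y)
  ultimately show ?case by (simp add: mult.assoc)
qed

lemma Rp_mult: assumes "x \<in> Rp" "x' \<in> Rp" shows "x * x' \<in> Rp"
proof -
  obtain c where c: "\<And>j. c j \<in> K" "x' = (\<Sum>j<p. c j * y ^ j)" using assms(2) unfolding Rp_def by blast
  have "x * x' = (\<Sum>j<p. c j * (y ^ j * x))" using c by (simp add: sum_distrib_left mult_ac)
  moreover have "(\<Sum>j<p. c j * (y ^ j * x)) \<in> Rp"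
    by (rule Rp_sum, rule Rp_scal) (use c Rp_mult_ypow assms(1) in auto)
  ultimately show ?thesis by simp
qed

lemma Rp_ypow: "y ^ n \<in> Rp"
  using Rp_mult_ypow[OF Rp_1, of n] by simp

definition Qf :: "'a set" where
  "Qf = {x. \<exists>a b. a \<in> Rp \<and> b \<in> Rp \<and> b \<noteq> 0 \<and> x = a / b}"

lemma Qf_subfield: "subfield Qf"
  unfolding subfield_def
proof (intro conjI ballI)
  show "0 \<in> Qf" unfolding Qf_def using Rp_0 Rp_1 by force
  show "1 \<in> Qf" unfolding Qf_def using Rp_1 by force
  fix x assume "x \<in> Qf"
  then obtain a b where ab: "a \<in> Rp" "b \<in> Rp" "b \<noteq> 0" "x = a / b" unfolding Qf_def by blast
  show "- x \<in> Qf" unfolding Qf_def using ab Rp_uminus by (intro CollectI exI[of _ "-a"] exI[of _ b]) auto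
  show "inverse x \<in> Qf"
  proof (cases "a = 0")
    case True then show ?thesis unfolding Qf_def using ab Rp_0 Rp_1 by (intro CollectI exI[of _ 0] exI[of _ 1]) auto
  next
    case False then show ?thesis unfolding Qf_def using ab by (intro CollectI exI[of _ b] exI[of _ a]) auto
  qed
  fix x' assume "x' \<in> Qf"
  then obtain a' b' where ab': "a' \<in> Rp" "b' \<in> Rp" "b' \<noteq> 0" "x' = a' / b'" unfolding Qf_def by blast
  show "x + x' \<in> Qf" unfolding Qf_def
    using ab ab' Rp_add Rp_mult
    by (intro CollectI exI[of _ "a * b' + a' * b"] exI[of _ "b * b'"]) (auto simp: field_simps)
  show "x * x' \<in> Qf" unfolding Qf_def
    using ab ab' Rp_mult
    by (intro CollectI exI[of _ "a * a'"] exI[of _ "b * b'"]) (auto simp: field_simps)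
qed

lemma Qf_UNIV: "x \<in> Qf"
proof -
  have "insert y K \<subseteq> Qf"
  proof
    fix z assume "z \<in> insert y K"
    then have "z \<in> Rp" using Rp_y Rp_K by blast
    then show "z \<in> Qf" unfolding Qf_def using Rp_1 by (intro CollectI exI[of _ z] exI[of _ 1]) auto
  qed
  then have "gen_field (insert y K) \<subseteq> Qf" using gen_field_least Qf_subfield by blast
  then show ?thesis using gen by auto
qed

lemma frac: obtains a b where "a \<in> Rp" "b \<in> Rp" "b \<noteq> 0" "x = a / b"
  using Qf_UNIV[of x] unfolding Qf_def by blast

lemma Gal_rep: assumes g: "g \<in> Gal K" and c: "\<And>j. c j \<in> K"
  shows "g (\<Sum>j<p. c j * y ^ j) = (\<Sum>j<p. c j * g y ^ j)"
proof -
  have ga: "field_aut g" using g by (rule Gal_aut)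
  show ?thesis
    by (simp add: field_aut_sum[OF ga] field_aut_mult[OF ga] field_aut_power[OF ga] Gal_fix[OF g c])
qed

lemma id_Gal: "id \<in> Gal K"
  using sig_pow[of 0] by simp

end


locale DV =
  fixes k :: "'a::field set" and v :: "'a \<Rightarrow> int"
  assumes dv: "dval k UNIV v"
begin

lemma vmult: "a \<noteq> 0 \<Longrightarrow> b \<noteq> 0 \<Longrightarrow> v (a * b) = v a + v b"
  using dv unfolding dval_def by blast

lemma vadd: "a \<noteq> 0 \<Longrightarrow> b \<noteq> 0 \<Longrightarrow> a + b \<noteq> 0 \<Longrightarrow> min (v a) (v b) \<le> v (a + b)"
  using dv unfolding dval_def by blast

lemma vk: "c \<in> k \<Longrightarrow> c \<noteq> 0 \<Longrightarrow> v c = 0"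
  using dv unfolding dval_def by blast

lemma v1: "v 1 = 0"
  using vmult[of 1 1] by simp

lemma vm1: "v (-1) = 0"
  using vmult[of "-1" "-1"] v1 by simp

lemma vuminus: "v (- a) = v a"
proof (cases "a = 0")
  case False
  have "v ((-1) * a) = v (-1) + v a" using False by (intro vmult) auto
  then show ?thesis using vm1 by simp
qed simp

lemma vinv: "a \<noteq> 0 \<Longrightarrow> v (inverse a) = - v a"
  using vmult[of a "inverse a"] v1 by simp

lemma vdiv: "a \<noteq> 0 \<Longrightarrow> b \<noteq> 0 \<Longrightarrow> v (a / b) = v a - v b"
  using vmult[of a "inverse b"] vinv[of b] by (simp add: divide_inverse)

lemma vpow: "a \<noteq> 0 \<Longrightarrow> v (a ^ n) = int n * v a"
  by (induction n) (simp_all add: v1 vmult algebra_simps)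

lemma vless:
  assumes "a \<noteq> 0" "b \<noteq> 0" "v a < v b"
  shows "a + b \<noteq> 0 \<and> v (a + b) = v a"
proof
  show ab: "a + b \<noteq> 0"
  proof
    assume "a + b = 0"
    then have "b = - a" by (simp add: eq_neg_iff_add_eq_0 add.commute)
    then show False using assms vuminus by simp
  qed
  have 1: "min (v a) (v b) \<le> v (a + b)" using vadd assms ab by blast
  have "a = (a + b) + (- b)" by simp
  then have "min (v (a + b)) (v (- b)) \<le> v a" using vadd[of "a + b" "- b"] ab assms by simp
  then show "v (a + b) = v a" using 1 assms vuminus[of b] by linarith
qed

definition ge :: "int \<Rightarrow> 'a \<Rightarrow> bool" where "ge B x \<longleftrightarrow> x = 0 \<or> B \<le> v x"

lemma ge_0: "ge B 0" unfolding ge_def by simp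
lemma ge_self: "ge (v x) x" unfolding ge_def by simp
lemma ge_mono: "B' \<le> B \<Longrightarrow> ge B x \<Longrightarrow> ge B' x" unfolding ge_def by auto
lemma ge_k: "c \<in> k \<Longrightarrow> ge 0 c" unfolding ge_def using vk[of c] by fastforce

lemma ge_add: assumes "ge B a" "ge B b" shows "ge B (a + b)"
proof (cases "a = 0 \<or> b = 0 \<or> a + b = 0")
  case True then show ?thesis using assms unfolding ge_def by auto
next
  case False
  then have "min (v a) (v b) \<le> v (a + b)" by (intro vadd) auto
  moreover have "B \<le> v a" "B \<le> v b" using assms False unfolding ge_def by auto
  ultimately have "B \<le> v (a + b)" by linarith
  then show ?thesis unfolding ge_def by simp
qed

lemma ge_uminus: "ge B a \<Longrightarrow> ge B (- a)" unfolding ge_def using vuminus by auto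

lemma ge_diff: "ge B a \<Longrightarrow> ge B b \<Longrightarrow> ge B (a - b)"
  using ge_add[of B a "- b"] ge_uminus[of B b] by simp

lemma ge_mult: assumes "ge B1 a" "ge B2 b" shows "ge (B1 + B2) (a * b)"
proof (cases "a = 0 \<or> b = 0")
  case True then show ?thesis unfolding ge_def by auto
next
  case False
  then have "v (a * b) = v a + v b" by (intro vmult) auto
  then show ?thesis using assms False unfolding ge_def by auto
qed

lemma ge_sum: "(\<And>i. i \<in> A \<Longrightarrow> ge B (t i)) \<Longrightarrow> ge B (sum t A)"
proof (induction A rule: infinite_finite_induct)
  case (infinite A) then show ?case using ge_0 by simp
next
  case empty then show ?case using ge_0 by simp
next
  case (insert a A) then show ?case using ge_add by simp
qed

lemma ge_div: assumes "ge B a" "b \<noteq> 0" shows "ge (B - v b) (a / b)"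
proof (cases "a = 0")
  case True then show ?thesis unfolding ge_def by simp
next
  case False
  then have "v (a / b) = v a - v b" using assms(2) by (rule vdiv)
  then show ?thesis using assms False unfolding ge_def by auto
qed

lemma ge_pow: assumes "ge B a" shows "ge (int n * B) (a ^ n)"
proof (induction n)
  case 0 then show ?case unfolding ge_def using v1 by simp
next
  case (Suc n)
  have "ge (B + int n * B) (a * a ^ n)" using ge_mult[OF assms Suc] .
  then show ?case by (simp add: algebra_simps)
qed

lemma ge_less: assumes "a \<noteq> 0" "ge (v a + 1) b" shows "a + b \<noteq> 0 \<and> v (a + b) = v a"
proof (cases "b = 0")
  case True then show ?thesis using assms by simp
next
  case False
  then have "v a < v b" using assms unfolding ge_def by auto
  then show ?thesis using vless assms(1) False by blast
qed

lemma sum_distinct: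
  assumes "finite J" "J \<noteq> {}" "\<And>j. j \<in> J \<Longrightarrow> t j \<noteq> 0" "inj_on (\<lambda>j. v (t j)) J"
  shows "sum t J \<noteq> 0 \<and> v (sum t J) = Min ((\<lambda>j. v (t j)) ` J)"
  using assms
proof (induction J rule: finite_ne_induct)
  case (singleton x) then show ?case by simp
next
  case (insert x F)
  have IH: "sum t F \<noteq> 0 \<and> v (sum t F) = Min ((\<lambda>j. v (t j)) ` F)"
    using insert.IH insert.prems by (auto intro: inj_on_subset)
  have "Min ((\<lambda>j. v (t j)) ` F) \<in> (\<lambda>j. v (t j)) ` F" using insert.hyps by (intro Min_in) auto
  then obtain j1 where j1: "j1 \<in> F" "v (sum t F) = v (t j1)" using IH by auto
  have "v (t x) \<noteq> v (t j1)"
  proof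
    assume "v (t x) = v (t j1)"
    then have "x = j1" using insert.prems(2) j1(1) unfolding inj_on_def by blast
    then show False using j1(1) insert.hyps by simp
  qed
  then have ne: "v (t x) \<noteq> v (sum t F)" using j1 by simp
  have tx: "t x \<noteq> 0" using insert.prems by simp
  have "t x + sum t F \<noteq> 0 \<and> v (t x + sum t F) = min (v (t x)) (v (sum t F))"
  proof (cases "v (t x) < v (sum t F)")
    case True then show ?thesis using vless[OF tx conjunct1[OF IH]] by simp
  next
    case False
    then have "v (sum t F) < v (t x)" using ne by simp
    then show ?thesis using vless[OF conjunct1[OF IH] tx] by (simp add: add.commute)
  qed
  moreover have "Min ((\<lambda>j. v (t j)) ` insert x F) = min (v (t x)) (Min ((\<lambda>j. v (t j)) ` F))"
    using insert.hyps by (simp add: Min_insert)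
  ultimately show ?case using insert.hyps IH by simp
qed

end


locale AV = AS k K p y f \<sigma> + DV k v
  for k K :: "'a::field set" and p y f \<sigma> and v :: "'a \<Rightarrow> int" +
  fixes m :: int
  assumes vy: "v y = - m" and mpos: "0 < m"
    and std: "\<forall>w. dval k K w \<longrightarrow> local_standard_form p f w"
begin

lemma vyj: "v (y ^ j) = - int j * m"
  using vpow[OF y0, of j] vy by simp

lemma vf: "v f = - int p * m"
proof -
  have "y ^ p \<noteq> 0" using y0 by simp
  moreover have "- y \<noteq> 0" using y0 by simp
  moreover have "v (y ^ p) < v (- y)" using vyj[of p] vuminus[of y] vy mpos p_ge2
    by (simp add: mult_strict_right_mono)
  ultimately have "v (y ^ p + - y) = v (y ^ p)" using vless by blast
  then show ?thesis using feq vyj by simp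
qed

definition S :: "int set" where "S = v ` (K - {0})"

lemma S_mem: "a \<in> K \<Longrightarrow> a \<noteq> 0 \<Longrightarrow> v a \<in> S" unfolding S_def by blast

lemma S_0: "0 \<in> S" using S_mem[of 1] subfieldD(2)[OF sfK] v1 by simp

lemma S_add: assumes "s \<in> S" "t \<in> S" shows "s + t \<in> S"
proof -
  obtain a b where "a \<in> K" "a \<noteq> 0" "s = v a" "b \<in> K" "b \<noteq> 0" "t = v b" using assms unfolding S_def by auto
  then show ?thesis using S_mem[of "a * b"] subfieldD(4)[OF sfK] vmult by simp
qed

lemma S_neg: assumes "s \<in> S" shows "- s \<in> S"
proof -
  obtain a where "a \<in> K" "a \<noteq> 0" "s = v a" using assms unfolding S_def by auto
  then show ?thesis using S_mem[of "inverse a"] subfieldD(6)[OF sfK] vinv by simp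
qed

lemma S_diff: "s \<in> S \<Longrightarrow> t \<in> S \<Longrightarrow> s - t \<in> S"
  using S_add[of s "- t"] S_neg[of t] by simp

lemma S_nat_mult: "s \<in> S \<Longrightarrow> int n * s \<in> S"
  by (induction n) (simp_all add: S_0 S_add algebra_simps)

lemma S_int_mult: assumes "s \<in> S" shows "t * s \<in> S"
proof (cases "t \<ge> 0")
  case True then show ?thesis using S_nat_mult[OF assms, of "nat t"] by simp
next
  case False
  then have "- t * s \<in> S" using S_nat_mult[OF assms, of "nat (- t)"] by simp
  then show ?thesis using S_neg by fastforce
qed

lemma pm_S: "int p * m \<in> S"
  using S_neg[OF S_mem[OF fK f0]] vf by simp

lemma S_gen: "\<exists>d>0. S = range (\<lambda>t. d * t)"
proof -
  define P where "P = {n::nat. 0 < n \<and> int n \<in> S}"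
  have "nat (int p * m) \<in> P" unfolding P_def using pm_S mpos p_ge2 by simp
  then have d0P: "(LEAST n. n \<in> P) \<in> P" by (rule LeastI)
  define d0 where "d0 = (LEAST n. n \<in> P)"
  have d0: "0 < d0" "int d0 \<in> S" using d0P unfolding d0_def P_def by auto
  have "s \<in> range (\<lambda>t. int d0 * t)" if s: "s \<in> S" for s
  proof -
    have "s mod int d0 = s - int d0 * (s div int d0)" by (simp add: mod_div_mult_eq[symmetric] algebra_simps)
    also have "\<dots> \<in> S" using S_diff[OF s S_int_mult[OF d0(2), of "s div int d0"]] by (simp add: mult.commute)
    finally have m1: "s mod int d0 \<in> S" .
    have m2: "0 \<le> s mod int d0" "s mod int d0 < int d0" using d0 by simp_all
    have "s mod int d0 = 0"
    proof (rule ccontr)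
      assume "s mod int d0 \<noteq> 0"
      then have "nat (s mod int d0) \<in> P" unfolding P_def using m1 m2 by simp
      then have "d0 \<le> nat (s mod int d0)" unfolding d0_def by (rule Least_le)
      then show False using m2 by linarith
    qed
    then have "s = int d0 * (s div int d0)" by (metis add.right_neutral mult_div_mod_eq)
    then show ?thesis by blast
  qed
  moreover have "int d0 * t \<in> S" for t using S_int_mult[OF d0(2), of t] by (simp add: mult.commute)
  ultimately have "S = range (\<lambda>t. int d0 * t)" by blast
  then show ?thesis using d0(1) by (intro exI[of _ "int d0"]) simp
qed

lemma key: assumes j: "0 < j" "j < p" shows "int j * m \<notin> S"
proof
  assume jS: "int j * m \<in> S"
  obtain d where d: "d > 0" "S = range (\<lambda>t. d * t)" using S_gen by blast
  define w where "w x = v x div d" for x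
  have Sd: "s \<in> S \<Longrightarrow> s = d * (s div d)" for s using d by auto
  have wv: "a \<in> K \<Longrightarrow> a \<noteq> 0 \<Longrightarrow> v a = d * w a" for a using Sd[OF S_mem] unfolding w_def by blast
  have "dval k K w"
    unfolding dval_def
  proof (intro conjI ballI impI)
    fix a b assume a: "a \<in> K - {0}" and b: "b \<in> K - {0}"
    have ab: "a * b \<in> K - {0}" using a b subfieldD(4)[OF sfK] by auto
    have "d * w (a * b) = d * w a + d * w b" using wv[of "a * b"] wv[of a] wv[of b] a b ab vmult by auto
    then have "d * w (a * b) = d * (w a + w b)" by (simp add: distrib_left)
    then show "w (a * b) = w a + w b" using d(1) by simp
    assume ab0: "a + b \<noteq> 0"
    have abK: "a + b \<in> K" using a b subfieldD(3)[OF sfK] by auto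
    have "min (d * w a) (d * w b) \<le> d * w (a + b)"
      using vadd[of a b] ab0 a b wv[of a] wv[of b] wv[OF abK ab0] by auto
    then show "min (w a) (w b) \<le> w (a + b)" using d(1)
      by (metis min_def mult_le_cancel_left_pos)
  next
    fix c assume "c \<in> k - {0}"
    then show "w c = 0" unfolding w_def using vk by simp
  next
    show "w ` (K - {0}) = UNIV"
    proof (intro set_eqI iffI)
      fix n :: int
      have "d * n \<in> S" using d by auto
      then have "\<exists>a\<in>K - {0}. d * n = v a" unfolding S_def by (simp only: image_iff)
      then obtain a where "a \<in> K - {0}" "v a = d * n" by (metis)
      then show "n \<in> w ` (K - {0})" unfolding w_def using d(1) by (intro image_eqI[of _ _ a]) auto
    qed auto
  qed
  then have "local_standard_form p f w" using std by blast
  then have ndvd: "\<not> int p dvd (- w f)" and wf: "w f < 0"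
  proof -
    have "d * w f = - int p * m" using wv[OF fK f0] vf by simp
    then have "d * w f < 0" using mpos p_ge2 by (simp add: mult_pos_pos)
    then show wf: "w f < 0" using d(1) by (simp add: mult_less_0_iff)
    show "\<not> int p dvd (- w f)" using \<open>local_standard_form p f w\<close> f0 wf
      unfolding local_standard_form_def by auto
  qed
  have dwf: "d * (- w f) = int p * m" using wv[OF fK f0] vf by simp
  obtain e where e: "int j * m = d * e" using jS d by auto
  have "int j * m * (- w f) = d * e * (- w f)" using e by simp
  also have "\<dots> = e * (d * (- w f))" by (simp only: mult_ac)
  also have "\<dots> = e * (int p * m)" by (simp only: dwf)
  finally have "(int j * (- w f)) * m = (e * int p) * m" by (simp add: algebra_simps)
  then have "int j * (- w f) = e * int p" using mpos mult_right_cancel[of m "int j * (- w f)" "e * int p"] by linarith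
  then have "int p dvd int j * (- w f)" by (metis dvd_triv_right)
  moreover have "prime (int p)" using prime by simp
  ultimately have "int p dvd int j \<or> int p dvd (- w f)" by (simp add: prime_dvd_mult_iff)
  moreover have "\<not> int p dvd int j" using j by (auto dest: zdvd_imp_le)
  ultimately show False using ndvd by blast
qed

end


context AV
begin

lemma distinct_cls:
  assumes "a \<in> K" "a \<noteq> 0" "b \<in> K" "b \<noteq> 0" "i < p" "j < p"
    and eq: "v a - int i * m = v b - int j * m"
  shows "i = j"
proof (rule ccontr)
  assume ne: "i \<noteq> j"
  { fix a b :: 'a and i j :: nat
    assume *: "a \<in> K" "a \<noteq> 0" "b \<in> K" "b \<noteq> 0" "i < j" "j < p" "v a - int i * m = v b - int j * m"
    then have "int (j - i) * m = v b - v a" by (simp add: of_nat_diff algebra_simps)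
    moreover have "v b - v a \<in> S" using S_diff[OF S_mem S_mem] * by blast
    ultimately have "int (j - i) * m \<in> S" by simp
    moreover have "0 < j - i" "j - i < p" using * by auto
    ultimately have False using key by blast }
  note ** = this
  show False
  proof (cases "i < j")
    case True show False using **[OF assms(1-4) True assms(6) eq] by blast
  next
    case False
    then have "j < i" using ne by simp
    show False using **[OF assms(3,4,1,2) \<open>j < i\<close> assms(5) eq[symmetric]] by blast
  qed
qed

lemma rep_val:
  assumes c: "\<And>j. c j \<in> K" and x: "x = (\<Sum>j<p. c j * y ^ j)" and x0: "x \<noteq> 0"
  shows "\<exists>j0<p. c j0 \<noteq> 0 \<and> v x = v (c j0) - int j0 * m \<and>
            (\<forall>j<p. c j \<noteq> 0 \<longrightarrow> j \<noteq> j0 \<longrightarrow> v x < v (c j) - int j * m)"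
proof -
  define J where "J = {j. j < p \<and> c j \<noteq> 0}"
  define t where "t j = c j * y ^ j" for j
  have finJ: "finite J" unfolding J_def by simp
  have xJ: "x = sum t J" unfolding x t_def J_def
    by (rule sum.mono_neutral_right) auto
  have J0: "J \<noteq> {}" using x0 xJ by auto
  have t0: "t j \<noteq> 0" if "j \<in> J" for j using that y0 unfolding J_def t_def by simp
  have vt: "v (t j) = v (c j) - int j * m" if "j \<in> J" for j
    using that y0 vmult[of "c j" "y ^ j"] vyj[of j] unfolding J_def t_def by simp
  have inj: "inj_on (\<lambda>j. v (t j)) J"
  proof (rule inj_onI)
    fix i j assume "i \<in> J" "j \<in> J" "v (t i) = v (t j)"
    then show "i = j" using distinct_cls[of "c i" "c j" i j] c vt unfolding J_def by auto
  qed
  have sd: "v (sum t J) = Min ((\<lambda>j. v (t j)) ` J)" using sum_distinct[OF finJ J0 t0 inj] by blast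
  have "Min ((\<lambda>j. v (t j)) ` J) \<in> (\<lambda>j. v (t j)) ` J" using finJ J0 by (intro Min_in) auto
  then obtain j0 where j0: "j0 \<in> J" "v x = v (t j0)" using sd xJ by auto
  have "v x < v (c j) - int j * m" if "j < p" "c j \<noteq> 0" "j \<noteq> j0" for j
  proof -
    have jJ: "j \<in> J" using that unfolding J_def by simp
    have "v x \<le> v (t j)" using sd xJ finJ jJ by (simp add: Min_le)
    moreover have "v (t j) \<noteq> v (t j0)" using inj jJ j0(1) that(3) unfolding inj_on_def by blast
    ultimately show ?thesis using j0(2) vt[OF jJ] by simp
  qed
  then show ?thesis using j0 vt unfolding J_def by (intro exI[of _ j0]) auto
qed

lemma rep_val_le:
  assumes c: "\<And>j. c j \<in> K" and x: "x = (\<Sum>j<p. c j * y ^ j)" and x0: "x \<noteq> 0"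
  shows "\<forall>j<p. c j \<noteq> 0 \<longrightarrow> v x \<le> v (c j) - int j * m"
  using rep_val[OF c x x0] by (metis order.order_iff_strict)

lemma rep_val_S:
  assumes c: "\<And>j. c j \<in> K" and x: "x = (\<Sum>j<p. c j * y ^ j)" and x0: "x \<noteq> 0"
    and xS: "v x \<in> S"
  shows "\<forall>j<p. 0 < j \<longrightarrow> c j \<noteq> 0 \<longrightarrow> v x + 1 \<le> v (c j) - int j * m"
proof -
  obtain j0 where j0: "j0 < p" "c j0 \<noteq> 0" "v x = v (c j0) - int j0 * m"
    "\<forall>j<p. c j \<noteq> 0 \<longrightarrow> j \<noteq> j0 \<longrightarrow> v x < v (c j) - int j * m"
    using rep_val[OF c x x0] by blast
  have "j0 = 0"
  proof (rule ccontr)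
    assume "j0 \<noteq> 0"
    have "int j0 * m = v (c j0) - v x" using j0(3) by simp
    also have "\<dots> \<in> S" using S_diff[OF S_mem[OF c j0(2)] xS] .
    finally show False using key[of j0] \<open>j0 \<noteq> 0\<close> j0(1) by simp
  qed
  then show ?thesis using j0(4) by auto
qed

lemma gy: assumes "g \<in> Gal K" obtains \<gamma> where "\<gamma> \<in> k" "g y = y + \<gamma>"
  using Gal_y[OF assms] of_nat_k by blast

lemma v_yg: assumes "\<gamma> \<in> k" shows "y + \<gamma> \<noteq> 0 \<and> v (y + \<gamma>) = - m"
proof -
  have g0: "ge 0 \<gamma>" by (rule ge_k[OF assms])
  have "v y + 1 \<le> 0" using vy mpos by simp
  then have "ge (v y + 1) \<gamma>" using g0 by (rule ge_mono)
  then have "y + \<gamma> \<noteq> 0 \<and> v (y + \<gamma>) = v y" by (rule ge_less[OF y0])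
  then show ?thesis using vy by simp
qed

lemma ge_diffpow:
  assumes "\<gamma> \<in> k" "0 < n"
  shows "ge (- (int n - 1) * m) ((y + \<gamma>) ^ n - y ^ n)"
proof -
  have e: "(y + \<gamma>) ^ n - y ^ n = \<gamma> * (\<Sum>i<n. y ^ (n - Suc i) * (y + \<gamma>) ^ i)"
    by (simp add: power_diff_sumr2)
  have gyg: "ge (- m) (y + \<gamma>)" using v_yg[OF assms(1)] ge_self[of "y + \<gamma>"] by simp
  have gy1: "ge (- m) y" using ge_self[of y] vy by simp
  have "ge (- (int n - 1) * m) (y ^ (n - Suc i) * (y + \<gamma>) ^ i)" if "i < n" for i
  proof -
    have "ge (int (n - Suc i) * (- m) + int i * (- m)) (y ^ (n - Suc i) * (y + \<gamma>) ^ i)"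
      by (intro ge_mult ge_pow gy1 gyg)
    moreover have "int (n - Suc i) * (- m) + int i * (- m) = - (int n - 1) * m"
      using that by (simp add: of_nat_diff algebra_simps)
    ultimately show ?thesis by simp
  qed
  then have "ge (- (int n - 1) * m) (\<Sum>i<n. y ^ (n - Suc i) * (y + \<gamma>) ^ i)" by (intro ge_sum) auto
  then have "ge (0 + - (int n - 1) * m) (\<gamma> * (\<Sum>i<n. y ^ (n - Suc i) * (y + \<gamma>) ^ i))"
    by (intro ge_mult ge_k assms(1))
  then show ?thesis using e by simp
qed

lemma gdiff:
  assumes g: "g \<in> Gal K" and c: "\<And>j. c j \<in> K" and x: "x = (\<Sum>j<p. c j * y ^ j)"
    and B: "\<forall>j<p. 0 < j \<longrightarrow> c j \<noteq> 0 \<longrightarrow> B \<le> v (c j) - int j * m"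
  shows "ge (B + m) (g x - x)"
proof -
  obtain \<gamma> where gam: "\<gamma> \<in> k" "g y = y + \<gamma>" using gy[OF g] by blast
  have "g x - x = (\<Sum>j<p. c j * ((y + \<gamma>) ^ j - y ^ j))"
    unfolding x Gal_rep[OF g c] gam(2) by (simp add: sum_subtractf right_diff_distrib)
  moreover have "ge (B + m) (c j * ((y + \<gamma>) ^ j - y ^ j))" if "j \<in> {..<p}" for j
  proof (cases "j = 0 \<or> c j = 0")
    case True then show ?thesis using ge_0 by auto
  next
    case False
    then have "ge (v (c j) + - (int j - 1) * m) (c j * ((y + \<gamma>) ^ j - y ^ j))"
      by (intro ge_mult ge_self ge_diffpow gam(1)) simp
    moreover have "B + m \<le> v (c j) + - (int j - 1) * m" using B that False by (auto simp: algebra_simps)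
    ultimately show ?thesis by (rule ge_mono[rotated])
  qed
  ultimately show ?thesis by (simp only:) (rule ge_sum)
qed

lemma gdiff_Rp:
  assumes g: "g \<in> Gal K" and x: "x \<in> Rp" "x \<noteq> 0"
  shows "ge (v x + m) (g x - x)" and "v x \<in> S \<Longrightarrow> ge (v x + 1 + m) (g x - x)"
proof -
  obtain c where c: "\<And>j. c j \<in> K" "x = (\<Sum>j<p. c j * y ^ j)" using x(1) unfolding Rp_def by blast
  show "ge (v x + m) (g x - x)"
    using rep_val_le[OF c x(2)] by (intro gdiff[OF g c]) auto
  assume "v x \<in> S"
  then show "ge (v x + 1 + m) (g x - x)"
    using rep_val_S[OF c x(2)] by (intro gdiff[OF g c]) auto
qed

lemma vg_Rp: assumes g: "g \<in> Gal K" and x: "x \<in> Rp" "x \<noteq> 0" shows "v (g x) = v x"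
proof -
  have "v x + 1 \<le> v x + m" using mpos by simp
  then have "ge (v x + 1) (g x - x)" using gdiff_Rp(1)[OF g x] by (rule ge_mono)
  then have "x + (g x - x) \<noteq> 0 \<and> v (x + (g x - x)) = v x" by (rule ge_less[OF x(2)])
  then have "v (x + (g x - x)) = v x" by (rule conjunct2)
  then show ?thesis by simp
qed

lemma vg: assumes g: "g \<in> Gal K" and x0: "x \<noteq> 0" shows "v (g x) = v x"
proof -
  obtain a b where ab: "a \<in> Rp" "b \<in> Rp" "b \<noteq> 0" "x = a / b" by (rule frac)
  have a0: "a \<noteq> 0" using ab x0 by auto
  have ga: "field_aut g" using g by (rule Gal_aut)
  have "g x = g a / g b" using ab(4) field_aut_divide[OF ga] by simp
  moreover have "g a \<noteq> 0" "g b \<noteq> 0" using a0 ab(3) field_aut_eq_0_iff[OF ga] by auto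
  ultimately have "v (g x) = v (g a) - v (g b)" using vdiv by simp
  also have "\<dots> = v a - v b" using vg_Rp[OF g ab(1) a0] vg_Rp[OF g ab(2,3)] by simp
  also have "\<dots> = v x" using vdiv[OF a0 ab(3)] ab(4) by simp
  finally show ?thesis .
qed

end


context AV
begin

lemma good_frac:
  assumes x0: "x \<noteq> 0"
  obtains a b where "a \<in> Rp" "b \<in> Rp" "a \<noteq> 0" "b \<noteq> 0" "x = a / b" "v b \<in> S"
proof -
  obtain a b where ab: "a \<in> Rp" "b \<in> Rp" "b \<noteq> 0" "x = a / b" by (rule frac)
  have a0: "a \<noteq> 0" using ab x0 by auto
  obtain c where c: "\<And>j. c j \<in> K" "b = (\<Sum>j<p. c j * y ^ j)" using ab(2) unfolding Rp_def by blast
  obtain j0 where j0: "j0 < p" "c j0 \<noteq> 0" "v b = v (c j0) - int j0 * m"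
    using rep_val[OF c ab(3)] by blast
  define t where "t = y ^ (p - j0)"
  have t0: "t \<noteq> 0" unfolding t_def using y0 by simp
  have tR: "t \<in> Rp" unfolding t_def by (rule Rp_ypow)
  have a'R: "a * t \<in> Rp" using Rp_mult[OF ab(1) tR] .
  have b'R: "b * t \<in> Rp" using Rp_mult[OF ab(2) tR] .
  have a'0: "a * t \<noteq> 0" using a0 t0 by simp
  have b'0: "b * t \<noteq> 0" using ab(3) t0 by simp
  have xe: "x = (a * t) / (b * t)" using ab(4) t0 by simp
  have "v (b * t) = v b + v t" using vmult[OF ab(3) t0] .
  also have "v t = - int (p - j0) * m" unfolding t_def by (rule vyj)
  also have "v b + - int (p - j0) * m = v (c j0) + v f"
    using j0(1,3) vf by (simp add: of_nat_diff algebra_simps)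
  also have "\<dots> = v (c j0 * f)" using vmult[OF j0(2) f0] by simp
  also have "\<dots> \<in> S" using S_mem subfieldD(4)[OF sfK c(1) fK] j0(2) f0 by simp
  finally have "v (b * t) \<in> S" .
  then show ?thesis using that a'R b'R a'0 b'0 xe by blast
qed

lemma ram_in:
  assumes g: "g \<in> Gal K" and i: "int i \<le> m"
  shows "g \<in> ram_group K v i"
  unfolding ram_group_def
proof (intro CollectI conjI allI impI g)
  have ga: "field_aut g" using g by (rule Gal_aut)
  fix x
  show "x \<noteq> 0 \<Longrightarrow> v (g x) = v x" using vg[OF g] by blast
  assume x: "x = 0 \<or> 0 \<le> v x"
  show "g x - x = 0 \<or> int i + 1 \<le> v (g x - x)"
  proof (cases "x = 0")
    case True then show ?thesis using field_aut_0[OF ga] by simp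
  next
    case False
    then have vx: "0 \<le> v x" using x by simp
    obtain a b where ab: "a \<in> Rp" "b \<in> Rp" "a \<noteq> 0" "b \<noteq> 0" "x = a / b" "v b \<in> S"
      using good_frac[OF False] by blast
    have gb0: "g b \<noteq> 0" using ab(4) field_aut_eq_0_iff[OF ga] by simp
    have vgb: "v (g b) = v b" using vg_Rp[OF g ab(2,4)] .
    have vxab: "v x = v a - v b" using vdiv[OF ab(3,4)] ab(5) by simp
    define e :: int where "e = (if v a \<in> S then 1 else 0)"
    have e01: "0 \<le> e" "e \<le> 1" unfolding e_def by auto
    have ga_ge: "ge (v a + e + m) (g a - a)"
      using gdiff_Rp[OF g ab(1,3)] unfolding e_def by (cases "v a \<in> S") simp_all
    have gb_ge: "ge (v b + 1 + m) (g b - b)" using gdiff_Rp(2)[OF g ab(2,4) ab(6)] .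
    have n1: "ge (v a + e + m + v b) ((g a - a) * b)" using ge_mult[OF ga_ge ge_self] .
    have n2: "ge (v a + (v b + 1 + m)) (a * (g b - b))" using ge_mult[OF ge_self gb_ge] .
    have n2': "ge (v a + e + m + v b) (a * (g b - b))"
      using e01 by (intro ge_mono[OF _ n2]) simp
    have num: "ge (v a + e + m + v b) ((g a - a) * b - a * (g b - b))" using ge_diff[OF n1 n2'] .
    have den0: "b * g b \<noteq> 0" using ab(4) gb0 by simp
    have vden: "v (b * g b) = v b + v b" using vmult[OF ab(4) gb0] vgb by simp
    have gx: "g (a / b) = g a / g b" using field_aut_divide[OF ga] by simp
    have gxe: "g x - x = ((g a - a) * b - a * (g b - b)) / (b * g b)"
      unfolding ab(5) gx using ab(4) gb0 by (simp add: field_simps)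
    have eqB: "v a + e + m + v b - v (b * g b) = v x + e + m" using vden vxab by simp
    have "ge (v x + e + m) (((g a - a) * b - a * (g b - b)) / (b * g b))"
      using ge_div[OF num den0] unfolding eqB .
    then have gx_ge: "ge (v x + e + m) (g x - x)" unfolding gxe .
    have "int i + 1 \<le> v x + e + m"
    proof (cases "v x = 0")
      case True
      then have "v a = v b" using vxab by simp
      then have "e = 1" unfolding e_def using ab(6) by simp
      then show ?thesis using i True by simp
    next
      case False
      then show ?thesis using vx e01 i by simp
    qed
    then have "ge (int i + 1) (g x - x)" using gx_ge by (rule ge_mono)
    then show ?thesis unfolding ge_def by simp
  qed
qed

lemma ram_small:
  assumes r: "g \<in> ram_group K v i" and gid: "g \<noteq> id"
  shows "int i + 1 \<le> 2 * m"
proof -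
  have g: "g \<in> Gal K" using r unfolding ram_group_def by simp
  have ga: "field_aut g" using g by (rule Gal_aut)
  obtain c where c: "c < p" "g y = y + of_nat c" using Gal_y[OF g] by blast
  have "c \<noteq> 0"
  proof
    assume "c = 0"
    then have "g y = id y" using c by simp
    then show False using Gal_eq[OF g id_Gal] gid by simp
  qed
  define \<gamma> :: 'a where "\<gamma> = of_nat c"
  have gam0: "\<gamma> \<noteq> 0" unfolding \<gamma>_def using of_nat_inj[OF c(1), of 0] p_ge2 \<open>c \<noteq> 0\<close> by auto
  have gamk: "\<gamma> \<in> k" unfolding \<gamma>_def by (rule of_nat_k)
  have yg: "y + \<gamma> \<noteq> 0" "v (y + \<gamma>) = - m" using v_yg[OF gamk] by auto
  define x where "x = inverse y"
  have vx: "v x = m" unfolding x_def using vinv[OF y0] vy by simp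
  have gx: "g (inverse y) = inverse (y + \<gamma>)" unfolding field_aut_inverse[OF ga] c(2) \<gamma>_def ..
  have e: "g x - x = (- \<gamma>) / ((y + \<gamma>) * y)"
    unfolding x_def gx using y0 yg(1) by (simp add: field_simps)
  have ne: "g x - x \<noteq> 0" unfolding e using gam0 y0 yg(1) by simp
  have "v (g x - x) = v (- \<gamma>) - v ((y + \<gamma>) * y)"
    unfolding e using gam0 y0 yg(1) by (intro vdiv) auto
  also have "\<dots> = 2 * m" using vuminus[of \<gamma>] vk[OF gamk gam0] vmult[OF yg(1) y0] yg(2) vy by simp
  finally have vd: "v (g x - x) = 2 * m" .
  have "x = 0 \<or> 0 \<le> v x" using vx mpos by simp
  then have "g x - x = 0 \<or> int i + 1 \<le> v (g x - x)" using r unfolding ram_group_def by blast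
  then show ?thesis using ne vd by simp
qed

lemma dprime_ge: "(int p - 1) * m \<le> int (dprime K v)"
proof -
  define G where "G i = ram_group K v i" for i
  define I where "I = {i. i \<ge> 1 \<and> card (G i) > 1}"
  have GsubGal: "G i \<subseteq> Gal K" for i unfolding G_def ram_group_def by auto
  have finG: "finite (G i)" for i using finite_subset[OF GsubGal finite_Gal] .
  have Isub: "I \<subseteq> {..nat (2 * m)}"
  proof
    fix i assume "i \<in> I"
    then have c1: "card (G i) > 1" unfolding I_def by simp
    have "\<exists>g\<in>G i. g \<noteq> id"
    proof (rule ccontr)
      assume "\<not> (\<exists>g\<in>G i. g \<noteq> id)"
      then have "G i \<subseteq> {id}" by auto
      then have "card (G i) \<le> card {id :: 'a \<Rightarrow> 'a}" by (intro card_mono) auto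
      then show False using c1 by simp
    qed
    then obtain g where "g \<in> G i" "g \<noteq> id" by blast
    then have "int i + 1 \<le> 2 * m" using ram_small unfolding G_def by blast
    then show "i \<in> {..nat (2 * m)}" by simp
  qed
  have finI: "finite I" using finite_subset[OF Isub] by simp
  have small: "{1..nat m} \<subseteq> I"
  proof
    fix i assume i: "i \<in> {1..nat m}"
    have "G i = Gal K" using GsubGal ram_in i unfolding G_def by fastforce
    then have "card (G i) = p" using card_Gal by simp
    then show "i \<in> I" unfolding I_def using i p_ge2 by simp
  qed
  have Gm: "card (G i) - 1 = p - 1" if "i \<in> {1..nat m}" for i
  proof -
    have "G i = Gal K" using GsubGal ram_in that unfolding G_def by fastforce
    then show ?thesis using card_Gal by simp
  qed
  have "(\<Sum>i\<in>{1..nat m}. card (G i) - 1) \<le> (\<Sum>i\<in>I. card (G i) - 1)"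
    by (rule sum_mono2[OF finI small]) simp
  moreover have "(\<Sum>i\<in>{1..nat m}. card (G i) - 1) = nat m * (p - 1)" using Gm by simp
  moreover have "dprime K v = (\<Sum>i\<in>I. card (G i) - 1)" unfolding dprime_def I_def G_def ..
  ultimately have "nat m * (p - 1) \<le> dprime K v" by simp
  then have "int (nat m * (p - 1)) \<le> int (dprime K v)" by linarith
  moreover have "int (nat m * (p - 1)) = (int p - 1) * m" using mpos p_ge2 by (simp add: of_nat_diff)
  ultimately show ?thesis by simp
qed

lemma main_val: "- int (dprime K v) \<le> v (y ^ (p - 1))"
proof -
  have "v (y ^ (p - 1)) = - (int p - 1) * m" using vyj[of "p - 1"] p_ge2 by (simp add: of_nat_diff)
  moreover have "- (int p - 1) * m = - ((int p - 1) * m)" by (simp only: mult_minus_left)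
  ultimately show ?thesis using dprime_ge by linarith
qed

end


lemma val_part:
  assumes as: "AS k K p y f \<sigma>" and dv: "dval k UNIV v"
    and std: "\<forall>w. dval k K w \<longrightarrow> local_standard_form p f w"
  shows "- int (dprime K v) \<le> v (y ^ (p - 1))"
proof (cases "v y < 0")
  case True
  have "AV k K p y f \<sigma> v (- v y)"
    unfolding AV_def AV_axioms_def DV_def using as dv std True by auto
  then show ?thesis by (rule AV.main_val)
next
  case False
  interpret D: DV k v by (rule DV.intro) (rule dv)
  have "y \<noteq> 0" using AS.y0[OF as] .
  then have "v (y ^ (p - 1)) = int (p - 1) * v y" by (rule D.vpow)
  also have "\<dots> \<ge> 0" using False by simp
  finally show ?thesis by simp
qed

theorem lemma7p2:
  fixes k K :: "'a::field set" and p :: nat and y f :: 'a and \<sigma> :: "'a \<Rightarrow> 'a"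
  assumes "prime p" and "CHAR('a) = p"
    and "alg_closed_subfield k"
    and "function_field k K"
    and "AS_generator p K y f \<sigma>"
    and "global_standard_form p k K f"
  shows "magical k K (y ^ (p - 1)) \<and>
         (\<forall>g1\<in>Gal K. \<forall>g2\<in>Gal K.
            trace K (g1 (y ^ (p - 1)) * g2 (y ^ (p - 1) - 2)) = (if g1 = g2 then 1 else 0))"
proof -
  have as: "AS k K p y f \<sigma>"
    using assms(1,2,4,5) unfolding AS_def function_field_def AS_generator_def by auto
  have std: "\<forall>w. dval k K w \<longrightarrow> local_standard_form p f w"
    using assms(6) unfolding global_standard_form_def by blast
  have "magical k K (y ^ (p - 1))"
    unfolding magical_def
  proof (intro conjI allI impI)
    fix v assume "dval k UNIV v"
    then show "- int (dprime K v) \<le> v (y ^ (p - 1))" using val_part[OF as _ std] by blast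
  next
    show "trace K (y ^ (p - 1)) \<noteq> 0" using AS.trace_z[OF as] by simp
  qed
  then show ?thesis using AS.trace_part[OF as] by blast
qed


end
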